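(* Let $L\ge3$ and let $\hat\rho$ be a density operator on $\mathcal H_A\otimes\mathcal H_B$ with $\hat P^{(1)}\hat\rho\hat P^{(1)}=\hat\rho$. Define $e^{(\mathrm b,1)}=\mathrm{tr}(\hat\rho\,\hat e^{(\mathrm b)})$ and $e^{(\mathrm{ph},1)}=\mathrm{tr}(\hat\rho\,\hat e^{(\mathrm{ph})})$. If $0\le e^{(\mathrm b,1)}\le(10-3\sqrt5)/22$, then $$e^{(\mathrm{ph},1)}\le(3+\sqrt5)\,e^{(\mathrm b,1)},$$ and if $e^{(\mathrm b,1)}>(10-3\sqrt5)/22$, then $$e^{(\mathrm{ph},1)}\le\inf_{0<\lambda<3+\sqrt5}\Big\{\lambda e^{(\mathrm b,1)}+\frac{3-2\lambda+\sqrt{1+2\lambda^2}}{4}\Big\}.$$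
   Context: $\mathcal H_A=(\mathbb C^2)^{\otimes L}$ (qubits labelled $1,\dots,L$, with $Z$-basis $|0\rangle,|1\rangle$) and $\mathcal H_B=\mathbb C^L$ with orthonormal basis $|1\rangle_B,\dots,|L\rangle_B$. $\hat P(|\psi\rangle)=|\psi\rangle\langle\psi|$, $\bar s=s\oplus1$, and $\hat H|s\rangle=(|0\rangle+(-1)^s|1\rangle)/\sqrt2$. Let $\kappa_1=\kappa_L=1$ and $\kappa_i=1/2$ for $2\le i\le L-1$. For $1\le j\le L-1$ and $s\in\{0,1\}$ let $\hat\Pi_{j,s}=\hat P\big((\sqrt{\kappa_j}|j\rangle_B+(-1)^s\sqrt{\kappa_{j+1}}|j+1\rangle_B)/\sqrt2\big)$. Define (operators on the indicated qubits tensored with identity on the remaining qubits) $$\hat e^{(\mathrm{ph})}_j=\hat P(|1\rangle_{A,j}|1\rangle_{A,j+1})\otimes\sum_{s=0}^1\kappa_{j+s}\hat P(|j+s\rangle_B)+\sum_{s=0}^1\hat P(|s\rangle_{A,j}|\bar s\rangle_{A,j+1})\otimes\kappa_{j+s}\hat P(|j+s\rangle_B),$$ $$\hat e^{(\mathrm b)}_j=\sum_{s,s'\in\{0,1\}}\hat P(\hat H|s\rangle_{A,j})\otimes\hat P(\hat H|s'\rangle_{A,j+1})\otimes\hat\Pi_{j,s\oplus s'\oplus1},$$ and $\hat e^{(\mathrm{ph})}=\sum_{j=1}^{L-1}\hat e^{(\mathrm{ph})}_j$, $\hat e^{(\mathrm b)}=\sum_{j=1}^{L-1}\hat e^{(\mathrm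 b)}_j$. For $\bm a\in\{0,1\}^L$ let $|\bm a\rangle_A=|a_1\rangle_{A,1}\cdots|a_L\rangle_{A,L}$ and $\mathrm{wt}(\bm a)$ the number of $1$'s. The projector for one-photon emission is $\hat P^{(1)}=\sum_{\bm a:\,\mathrm{wt}(\bm a)=1}\sum_{i=1}^L\hat P(|\bm a\rangle_A|i\rangle_B)$. (Physically, $e^{(\mathrm b,1)}$ and $e^{(\mathrm{ph},1)}$ are the bit and phase error rates of single-photon emission events in the DPS QKD protocol.) *)

theory Defs
  imports Complex_Main
begin

text \<open>Basis of H_A (x) H_B: pairs (a, i) with a a 0/1 list of length L
  (a!(k-1) is the Z-basis value of qubit k) and i in {1..L}.
  Operators are represented by their matrix kernels K x y = <x|K|y>.\<close>

type_synonym idx = "nat list \<times> nat"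
type_synonym op = "idx \<Rightarrow> idx \<Rightarrow> complex"
type_synonym loc = "nat \<times> nat \<times> nat"

definition Idx :: "nat \<Rightarrow> idx set" where
  "Idx L = {(a, i). length a = L \<and> set a \<subseteq> {0, 1} \<and> i \<in> {1..L}}"

definition proj :: "('a \<Rightarrow> complex) \<Rightarrow> 'a \<Rightarrow> 'a \<Rightarrow> complex" where
  "proj \<psi> x y = \<psi> x * cnj (\<psi> y)"

definition ket :: "nat \<Rightarrow> nat \<Rightarrow> complex" where
  "ket s t = (if t = s then 1 else 0)"

definition hket :: "nat \<Rightarrow> nat \<Rightarrow> complex" where
  "hket s t = (if t = 0 then 1 else (-1) ^ s) / complex_of_real (sqrt 2)"

definition flip :: "nat \<Rightarrow> nat" where
  "flip s = (if s = 0 then 1 else 0)"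

definition kappa :: "nat \<Rightarrow> nat \<Rightarrow> real" where
  "kappa L i = (if i = 1 \<or> i = L then 1 else 1 / 2)"

definition PiB :: "nat \<Rightarrow> nat \<Rightarrow> nat \<Rightarrow> nat \<Rightarrow> nat \<Rightarrow> complex" where
  "PiB L j s = proj (\<lambda>b. (complex_of_real (sqrt (kappa L j)) * ket j b
       + (-1) ^ s * complex_of_real (sqrt (kappa L (j + 1))) * ket (j + 1) b)
       / complex_of_real (sqrt 2))"

text \<open>Local operators on (qubit j, qubit j+1, B), kernel on (x1,x2,b).\<close>
definition eph_loc :: "nat \<Rightarrow> nat \<Rightarrow> loc \<Rightarrow> loc \<Rightarrow> complex" where
  "eph_loc L j = (\<lambda>(x1, x2, b) (y1, y2, b').
     proj (ket 1) x1 y1 * proj (ket 1) x2 y2 *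
       (\<Sum>s\<in>{0, 1}. complex_of_real (kappa L (j + s)) * proj (ket (j + s)) b b')
   + (\<Sum>s\<in>{0, 1}. proj (ket s) x1 y1 * proj (ket (flip s)) x2 y2 *
       (complex_of_real (kappa L (j + s)) * proj (ket (j + s)) b b')))"

definition eb_loc :: "nat \<Rightarrow> nat \<Rightarrow> loc \<Rightarrow> loc \<Rightarrow> complex" where
  "eb_loc L j = (\<lambda>(x1, x2, b) (y1, y2, b').
     \<Sum>s\<in>{0, 1}. \<Sum>s'\<in>{0, 1}. proj (hket s) x1 y1 * proj (hket s') x2 y2 *
        PiB L j ((s + s' + 1) mod 2) b b')"

definition lift :: "nat \<Rightarrow> nat \<Rightarrow> (loc \<Rightarrow> loc \<Rightarrow> complex) \<Rightarrow> op" where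
  "lift L j K = (\<lambda>(a, i) (a', i').
     K (a ! (j - 1), a ! j, i) (a' ! (j - 1), a' ! j, i') *
     (if \<forall>k\<in>{1..L} - {j, j + 1}. a ! (k - 1) = a' ! (k - 1) then 1 else 0))"

definition e_ph :: "nat \<Rightarrow> op" where
  "e_ph L x y = (\<Sum>j\<in>{1..L - 1}. lift L j (eph_loc L j) x y)"

definition e_b :: "nat \<Rightarrow> op" where
  "e_b L x y = (\<Sum>j\<in>{1..L - 1}. lift L j (eb_loc L j) x y)"

definition P1 :: "nat \<Rightarrow> op" where
  "P1 L x y = (if x = y \<and> length (filter (\<lambda>t. t = 1) (fst x)) = 1 then 1 else 0)"

definition density_op :: "nat \<Rightarrow> op \<Rightarrow> bool" where
  "density_op L \<rho> \<longleftrightarrow>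
     (\<forall>x\<in>Idx L. \<forall>y\<in>Idx L. \<rho> x y = cnj (\<rho> y x)) \<and>
     (\<forall>v :: idx \<Rightarrow> complex. 0 \<le> Re (\<Sum>x\<in>Idx L. \<Sum>y\<in>Idx L. cnj (v x) * \<rho> x y * v y)) \<and>
     (\<Sum>x\<in>Idx L. \<rho> x x) = 1"

definition tr_prod :: "nat \<Rightarrow> op \<Rightarrow> op \<Rightarrow> complex" where
  "tr_prod L A B = (\<Sum>x\<in>Idx L. \<Sum>y\<in>Idx L. A x y * B y x)"

end

theory Submission
  imports Defs
begin


definition uv :: "nat \<Rightarrow> nat \<Rightarrow> nat list" where
  "uv L k = replicate (k - 1) 0 @ 1 # replicate (L - k) 0"

definition phi :: "nat \<Rightarrow> nat \<times> nat \<Rightarrow> idx" where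
  "phi L p = (uv L (fst p), snd p)"

definition KK :: "nat \<Rightarrow> (nat \<times> nat) set" where
  "KK L = {1..L} \<times> {1..L}"

abbreviation wt :: "nat list \<Rightarrow> nat" where
  "wt a \<equiv> length (filter (\<lambda>t. t = 1) a)"

lemma uv_len: "k \<in> {1..L} \<Longrightarrow> length (uv L k) = L"
  by (auto simp: uv_def)

lemma uv_nth: "k \<in> {1..L} \<Longrightarrow> t < L \<Longrightarrow> uv L k ! t = (if Suc t = k then 1 else 0)"
  by (auto simp: uv_def nth_append nth_Cons split: nat.splits)

lemma uv_wt: "wt (uv L k) = 1"
  by (simp add: uv_def)

lemma uv_set: "set (uv L k) \<subseteq> {0,1}"
  by (auto simp: uv_def)

lemma uv_set': "x \<in> set (uv L k) \<Longrightarrow> x = 0 \<or> x = 1"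
  by (auto simp: uv_def)

lemma uv_inj: "k \<in> {1..L} \<Longrightarrow> k' \<in> {1..L} \<Longrightarrow> uv L k = uv L k' \<Longrightarrow> k = k'"
proof -
  assume a: "k \<in> {1..L}" "k' \<in> {1..L}" "uv L k = uv L k'"
  have kL: "k - 1 < L" using a(1) by auto
  have h1: "uv L k ! (k - 1) = 1" using uv_nth[OF a(1) kL] a(1) by simp
  have h2: "uv L k' ! (k - 1) = (if Suc (k - 1) = k' then 1 else 0)" using uv_nth[OF a(2) kL] .
  have "uv L k' ! (k - 1) = 1" using h1 unfolding a(3) .
  then have "Suc (k - 1) = k'" using h2 by (metis zero_neq_one)
  then show ?thesis using a(1) by auto
qed

lemma phi_inj: "inj_on (phi L) (KK L)"
proof (rule inj_onI)
  fix p q assume p: "p \<in> KK L" and q: "q \<in> KK L" and e: "phi L p = phi L q"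
  have "uv L (fst p) = uv L (fst q)" "snd p = snd q" using e by (simp_all add: phi_def)
  moreover have "fst p \<in> {1..L}" "fst q \<in> {1..L}" using p q by (auto simp: KK_def)
  ultimately have "fst p = fst q" "snd p = snd q" using uv_inj by blast+
  then show "p = q" by (rule prod_eqI)
qed

lemma phi_Idx: "p \<in> KK L \<Longrightarrow> phi L p \<in> Idx L"
proof -
  assume p: "p \<in> KK L"
  then have "fst p \<in> {1..L}" "snd p \<in> {1..L}" by (auto simp: KK_def)
  then show ?thesis unfolding Idx_def phi_def using uv_len uv_set by simp
qed

lemma onephoton_char:
  assumes "(a, i) \<in> Idx L" "wt a = 1"
  shows "\<exists>k\<in>{1..L}. a = uv L k"
proof -
  have len: "length a = L" and st: "set a \<subseteq> {0,1}" using assms(1) by (auto simp: Idx_def)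
  have "card {t. t < length a \<and> a ! t = 1} = 1"
    using assms(2) by (simp add: length_filter_conv_card)
  then obtain m where m: "{t. t < length a \<and> a ! t = 1} = {m}" by (meson card_1_singletonE)
  have mL: "m < L" and am: "a ! m = 1" using m len by auto
  have oth: "t < L \<Longrightarrow> t \<noteq> m \<Longrightarrow> a ! t = 0" for t
  proof -
    assume "t < L" "t \<noteq> m"
    then have "a ! t \<noteq> 1" using m len by auto
    moreover have "a ! t \<in> {0,1}" using st \<open>t < L\<close> len nth_mem by blast
    ultimately show ?thesis by auto
  qed
  have k: "Suc m \<in> {1..L}" using mL by auto
  have "a = uv L (Suc m)"
  proof (rule nth_equalityI)
    show "length a = length (uv L (Suc m))" using len uv_len[OF k] by simp
  next
    fix t assume t: "t < length a"
    show "a ! t = uv L (Suc m) ! t"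
    proof (cases "t = m")
      case True then show ?thesis using am uv_nth[OF k] mL by simp
    next
      case False then show ?thesis using oth[of t] t len uv_nth[OF k, of t] by simp
    qed
  qed
  then show ?thesis using k by blast
qed

lemma Idx1_eq: "{x \<in> Idx L. wt (fst x) = 1} = phi L ` KK L"
proof
  show "phi L ` KK L \<subseteq> {x \<in> Idx L. wt (fst x) = 1}"
  proof (rule subsetI)
    fix x assume "x \<in> phi L ` KK L"
    then obtain p where p: "p \<in> KK L" "x = phi L p" by blast
    then show "x \<in> {x \<in> Idx L. wt (fst x) = 1}"
      using phi_Idx[OF p(1)] by (simp add: phi_def uv_def)
  qed
  show "{x \<in> Idx L. wt (fst x) = 1} \<subseteq> phi L ` KK L"
  proof
    fix x assume "x \<in> {x \<in> Idx L. wt (fst x) = 1}"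
    then obtain a i where x: "x = (a, i)" "(a, i) \<in> Idx L" "wt a = 1" by (cases x) auto
    then obtain k where k: "k \<in> {1..L}" "a = uv L k" using onephoton_char by blast
    have "i \<in> {1..L}" using x by (auto simp: Idx_def)
    then have "(k, i) \<in> KK L" using k by (simp add: KK_def)
    moreover have "x = phi L (k, i)" using x k by (simp add: phi_def)
    ultimately show "x \<in> phi L ` KK L" by blast
  qed
qed

lemma finite_Idx: "finite (Idx L)"
proof -
  have "Idx L \<subseteq> {a. set a \<subseteq> {0,1} \<and> length a = L} \<times> {1..L}"
    by (auto simp: Idx_def)
  moreover have "finite ({a. set a \<subseteq> {0,1::nat} \<and> length a = L} \<times> {1..L})"
    using finite_lists_length_eq[of "{0,1::nat}" L] by auto
  ultimately show ?thesis by (rule finite_subset)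
qed



definition cc :: "nat \<Rightarrow> nat \<Rightarrow> real" where
  "cc L j = sqrt (kappa L j) * sqrt (kappa L (Suc j))"

definition dg :: "nat \<Rightarrow> nat \<Rightarrow> nat \<Rightarrow> nat \<Rightarrow> real" where
  "dg L j b b' = (if b = b' then (if b = j then kappa L j / 2 else if b = Suc j then kappa L (Suc j) / 2 else 0) else 0)"

definition od :: "nat \<Rightarrow> nat \<Rightarrow> nat \<Rightarrow> nat \<Rightarrow> real" where
  "od L j b b' = (if (b = j \<and> b' = Suc j) \<or> (b = Suc j \<and> b' = j) then - cc L j / 2 else 0)"

lemma kappa_nn: "kappa L j \<ge> 0" by (simp add: kappa_def)

lemma sq2: "complex_of_real (sqrt 2) * complex_of_real (sqrt 2) = 2"
  by (simp flip: of_real_mult)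
lemma sq2': "complex_of_real (sqrt 2) * (complex_of_real (sqrt 2) * z) = 2 * z"
  by (simp add: mult.assoc[symmetric] sq2)
lemma sqk: "complex_of_real (sqrt (kappa L j)) * complex_of_real (sqrt (kappa L j)) = complex_of_real (kappa L j)"
  by (simp add: kappa_nn flip: of_real_mult)

lemma eb_same: "x1 \<in> {0,1} \<Longrightarrow> x2 \<in> {0,1} \<Longrightarrow>
  eb_loc L j (x1, x2, b) (x1, x2, b') = complex_of_real (dg L j b b')"
  by (auto simp: eb_loc_def proj_def hket_def PiB_def ket_def dg_def kappa_nn sq2 sq2' sqk)

lemma eb_diff1: "eb_loc L j (1, 0, b) (0, 1, b') = complex_of_real (od L j b b')"
  by (auto simp: eb_loc_def proj_def hket_def PiB_def ket_def od_def cc_def kappa_nn sq2 sq2' sqk)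

lemma eb_diff2: "eb_loc L j (0, 1, b) (1, 0, b') = complex_of_real (od L j b b')"
  by (auto simp: eb_loc_def proj_def hket_def PiB_def ket_def od_def cc_def kappa_nn sq2 sq2' sqk)

lemma eph_00: "eph_loc L j (0, 0, b) (0, 0, b') = 0"
  by (simp add: eph_loc_def proj_def ket_def flip_def)
lemma eph_10: "eph_loc L j (1, 0, b) (1, 0, b') = (if b = Suc j \<and> b' = Suc j then complex_of_real (kappa L (Suc j)) else 0)"
  by (simp add: eph_loc_def proj_def ket_def flip_def)
lemma eph_01: "eph_loc L j (0, 1, b) (0, 1, b') = (if b = j \<and> b' = j then complex_of_real (kappa L j) else 0)"
  by (simp add: eph_loc_def proj_def ket_def flip_def)
lemma eph_d1: "eph_loc L j (1, 0, b) (0, 1, b') = 0"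
  by (simp add: eph_loc_def proj_def ket_def flip_def)
lemma eph_d2: "eph_loc L j (0, 1, b) (1, 0, b') = 0"
  by (simp add: eph_loc_def proj_def ket_def flip_def)



lemma agree_iff:
  assumes "k \<in> {1..L}" "k' \<in> {1..L}"
  shows "(\<forall>t\<in>{1..L} - {j, Suc j}. (Suc (t - 1) = k') = (Suc (t - 1) = k)) \<longleftrightarrow> (k' = k \<or> {k', k} \<subseteq> {j, Suc j})"
proof
  assume h: "\<forall>t\<in>{1..L} - {j, Suc j}. (Suc (t - 1) = k') = (Suc (t - 1) = k)"
  show "k' = k \<or> {k', k} \<subseteq> {j, Suc j}"
  proof (rule ccontr)
    assume n: "\<not> (k' = k \<or> {k', k} \<subseteq> {j, Suc j})"
    then have "k' \<notin> {j, Suc j} \<or> k \<notin> {j, Suc j}" by auto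
    then show False
    proof
      assume "k' \<notin> {j, Suc j}"
      then have "k' \<in> {1..L} - {j, Suc j}" using assms by auto
      then have "(Suc (k' - 1) = k') = (Suc (k' - 1) = k)" using h by blast
      then show False using n assms by auto
    next
      assume "k \<notin> {j, Suc j}"
      then have "k \<in> {1..L} - {j, Suc j}" using assms by auto
      then have "(Suc (k - 1) = k') = (Suc (k - 1) = k)" using h by blast
      then show False using n assms by auto
    qed
  qed
next
  assume "k' = k \<or> {k', k} \<subseteq> {j, Suc j}"
  then show "\<forall>t\<in>{1..L} - {j, Suc j}. (Suc (t - 1) = k') = (Suc (t - 1) = k)" by auto
qed

lemma lift_phi:
  assumes j: "1 \<le> j" "j < L" and p: "p \<in> KK L" and q: "q \<in> KK L"
  shows "lift L j K (phi L q) (phi L p) =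
    (if fst q = fst p \<or> {fst q, fst p} \<subseteq> {j, Suc j}
     then K (if j = fst q then 1 else 0, if Suc j = fst q then 1 else 0, snd q)
            (if j = fst p then 1 else 0, if Suc j = fst p then 1 else 0, snd p) else 0)"
proof -
  obtain k i where pk: "p = (k, i)" by (cases p)
  obtain k' i' where qk: "q = (k', i')" by (cases q)
  have k: "k \<in> {1..L}" and k': "k' \<in> {1..L}" using p q pk qk by (auto simp: KK_def)
  have j1: "j - 1 < L" using j by auto
  have n1: "uv L k ! (j - 1) = (if j = k then 1 else 0)" using uv_nth[OF k j1] j by simp
  have n2: "uv L k ! j = (if Suc j = k then 1 else 0)" using uv_nth[OF k j(2)] by simp
  have n1': "uv L k' ! (j - 1) = (if j = k' then 1 else 0)" using uv_nth[OF k' j1] j by simp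
  have n2': "uv L k' ! j = (if Suc j = k' then 1 else 0)" using uv_nth[OF k' j(2)] by simp
  have ag: "(\<forall>t\<in>{1..L} - {j, j + 1}. uv L k' ! (t - 1) = uv L k ! (t - 1)) \<longleftrightarrow>
        (\<forall>t\<in>{1..L} - {j, Suc j}. (Suc (t - 1) = k') = (Suc (t - 1) = k))"
  proof -
    have "\<And>t. t \<in> {1..L} \<Longrightarrow> uv L k' ! (t - 1) = uv L k ! (t - 1) \<longleftrightarrow> (Suc (t - 1) = k') = (Suc (t - 1) = k)"
    proof -
      fix t assume t: "t \<in> {1..L}"
      then have "t - 1 < L" by auto
      then show "uv L k' ! (t - 1) = uv L k ! (t - 1) \<longleftrightarrow> (Suc (t - 1) = k') = (Suc (t - 1) = k)"
        using uv_nth[OF k] uv_nth[OF k'] by simp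
    qed
    then show ?thesis by auto
  qed
  show ?thesis
    unfolding pk qk lift_def phi_def fst_conv snd_conv split n1 n2 n1' n2'
    using ag agree_iff[OF k k', of j] by auto
qed



definition EBj :: "nat \<Rightarrow> nat \<Rightarrow> nat \<times> nat \<Rightarrow> nat \<times> nat \<Rightarrow> real" where
  "EBj L j q p = (if fst q = fst p then dg L j (snd q) (snd p)
     else if {fst q, fst p} = {j, Suc j} then od L j (snd q) (snd p) else 0)"

definition Ij :: "nat \<Rightarrow> nat \<times> nat \<Rightarrow> nat \<times> nat \<Rightarrow> real" where
  "Ij j p q = (if p = (j, j) \<and> q = (Suc j, Suc j) then 1 else 0)
    + (if p = (j, Suc j) \<and> q = (Suc j, j) then 1 else 0)
    + (if p = (Suc j, j) \<and> q = (j, Suc j) then 1 else 0)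
    + (if p = (Suc j, Suc j) \<and> q = (j, j) then 1 else 0)"

lemma lift_eb:
  assumes j: "1 \<le> j" "j < L" and p: "p \<in> KK L" and q: "q \<in> KK L"
  shows "lift L j (eb_loc L j) (phi L q) (phi L p) = complex_of_real (EBj L j q p)"
proof -
  obtain k i where pk: "p = (k, i)" by (cases p)
  obtain k' i' where qk: "q = (k', i')" by (cases q)
  show ?thesis
  proof (cases "k' = k")
    case True
    then show ?thesis using lift_phi[OF j p q] pk qk by (simp add: EBj_def eb_same)
  next
    case False
    show ?thesis
    proof (cases "{k', k} \<subseteq> {j, Suc j}")
      case True
      then have "(k' = j \<and> k = Suc j) \<or> (k' = Suc j \<and> k = j)" using False by auto
      then show ?thesis
      proof
        assume h: "k' = j \<and> k = Suc j"
        then show ?thesis using lift_phi[OF j p q] pk qk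
          by (simp add: EBj_def eb_diff1[unfolded One_nat_def] insert_commute)
      next
        assume h: "k' = Suc j \<and> k = j"
        then show ?thesis using lift_phi[OF j p q] pk qk
          by (simp add: EBj_def eb_diff2[unfolded One_nat_def] insert_commute)
      qed
    next
      case F2: False
      then have n1: "{k', k} \<noteq> {j, Suc j}" by auto
      have n2: "\<not> (fst q = fst p \<or> {fst q, fst p} \<subseteq> {j, Suc j})" using pk qk False F2 by auto
      have "lift L j (eb_loc L j) (phi L q) (phi L p) = 0"
        unfolding lift_phi[OF j p q] by (rule if_not_P[OF n2])
      moreover have "EBj L j q p = 0" using n1 False pk qk by (simp add: EBj_def)
      ultimately show ?thesis by simp
    qed
  qed
qed

lemma EBj_eq: "EBj L j q p = (if q = p then dg L j (snd p) (snd p) else 0) - cc L j / 2 * Ij j p q"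
proof -
  obtain k i where pk: "p = (k, i)" by (cases p)
  obtain k' i' where qk: "q = (k', i')" by (cases q)
  show ?thesis unfolding pk qk EBj_def Ij_def dg_def od_def
    by (auto simp: doubleton_eq_iff)
qed

lemma kappa_sum:
  assumes i: "i \<in> {1..L}" and L: "L \<ge> 3"
  shows "(\<Sum>j\<in>{1..L-1}. dg L j i i) = 1 / 2"
proof -
  have "\<And>j. dg L j i i = (if i = j then kappa L j / 2 else 0) + (if j = i - 1 then kappa L (Suc j) / 2 else 0)"
    using i by (auto simp: dg_def)
  then have "(\<Sum>j\<in>{1..L-1}. dg L j i i) = (\<Sum>j\<in>{1..L-1}. (if i = j then kappa L j / 2 else 0)) + (\<Sum>j\<in>{1..L-1}. (if j = i - 1 then kappa L (Suc j) / 2 else 0))"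
    by (simp add: sum.distrib)
  also have "\<dots> = (if i \<in> {1..L-1} then kappa L i / 2 else 0) + (if i - 1 \<in> {1..L-1} then kappa L (Suc (i - 1)) / 2 else 0)"
    by (simp add: sum.delta sum.delta')
  also have "\<dots> = 1 / 2" using i L by (auto simp: kappa_def)
  finally show ?thesis .
qed



definition EPj :: "nat \<Rightarrow> nat \<Rightarrow> nat \<times> nat \<Rightarrow> nat \<times> nat \<Rightarrow> real" where
  "EPj L j q p = (if q = p \<and> p = (j, Suc j) then kappa L (Suc j) else 0)
     + (if q = p \<and> p = (Suc j, j) then kappa L j else 0)"

lemma lift_eph:
  assumes j: "1 \<le> j" "j < L" and p: "p \<in> KK L" and q: "q \<in> KK L"
  shows "lift L j (eph_loc L j) (phi L q) (phi L p) = complex_of_real (EPj L j q p)"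
proof -
  obtain k i where pk: "p = (k, i)" by (cases p)
  obtain k' i' where qk: "q = (k', i')" by (cases q)
  show ?thesis
  proof (cases "k' = k")
    case True
    have "k = j \<or> k = Suc j \<or> (k \<noteq> j \<and> k \<noteq> Suc j)" by auto
    then show ?thesis
    proof (elim disjE)
      assume "k = j" then show ?thesis using lift_phi[OF j p q] pk qk True
        by (auto simp: EPj_def eph_10[unfolded One_nat_def])
    next
      assume "k = Suc j" then show ?thesis using lift_phi[OF j p q] pk qk True
        by (auto simp: EPj_def eph_01[unfolded One_nat_def])
    next
      assume "k \<noteq> j \<and> k \<noteq> Suc j" then show ?thesis using lift_phi[OF j p q] pk qk True
        by (auto simp: EPj_def eph_00)
    qed
  next
    case False
    show ?thesis
    proof (cases "{k', k} \<subseteq> {j, Suc j}")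
      case True
      then have "(k' = j \<and> k = Suc j) \<or> (k' = Suc j \<and> k = j)" using False by auto
      then show ?thesis
      proof
        assume h: "k' = j \<and> k = Suc j"
        then show ?thesis using lift_phi[OF j p q] pk qk
          by (simp add: EPj_def eph_d1[unfolded One_nat_def])
      next
        assume h: "k' = Suc j \<and> k = j"
        then show ?thesis using lift_phi[OF j p q] pk qk
          by (simp add: EPj_def eph_d2[unfolded One_nat_def])
      qed
    next
      case F2: False
      have n2: "\<not> (fst q = fst p \<or> {fst q, fst p} \<subseteq> {j, Suc j})" using pk qk False F2 by auto
      have "lift L j (eph_loc L j) (phi L q) (phi L p) = 0"
        unfolding lift_phi[OF j p q] by (rule if_not_P[OF n2])
      moreover have "EPj L j q p = 0" using False pk qk by (simp add: EPj_def)
      ultimately show ?thesis by simp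
    qed
  qed
qed

lemma e_b_phi:
  assumes L: "L \<ge> 3" and p: "p \<in> KK L" and q: "q \<in> KK L"
  shows "e_b L (phi L q) (phi L p) = complex_of_real ((if q = p then 1 / 2 else 0) - (\<Sum>j\<in>{1..L-1}. cc L j / 2 * Ij j p q))"
proof -
  have "e_b L (phi L q) (phi L p) = (\<Sum>j\<in>{1..L-1}. complex_of_real (EBj L j q p))"
    unfolding e_b_def by (rule sum.cong) (use lift_eb[OF _ _ p q] in auto)
  also have "\<dots> = complex_of_real (\<Sum>j\<in>{1..L-1}. EBj L j q p)" by simp
  also have "(\<Sum>j\<in>{1..L-1}. EBj L j q p) = (\<Sum>j\<in>{1..L-1}. (if q = p then dg L j (snd p) (snd p) else 0)) - (\<Sum>j\<in>{1..L-1}. cc L j / 2 * Ij j p q)"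
    by (simp add: EBj_eq sum_subtractf)
  also have "(\<Sum>j\<in>{1..L-1}. (if q = p then dg L j (snd p) (snd p) else 0)) = (if q = p then 1 / 2 else 0)"
  proof -
    have "snd p \<in> {1..L}" using p by (auto simp: KK_def)
    then show ?thesis using kappa_sum[OF _ L] by simp
  qed
  finally show ?thesis .
qed

lemma e_ph_phi:
  assumes p: "p \<in> KK L" and q: "q \<in> KK L"
  shows "e_ph L (phi L q) (phi L p) = complex_of_real (\<Sum>j\<in>{1..L-1}. EPj L j q p)"
proof -
  have "e_ph L (phi L q) (phi L p) = (\<Sum>j\<in>{1..L-1}. complex_of_real (EPj L j q p))"
    unfolding e_ph_def by (rule sum.cong) (use lift_eph[OF _ _ p q] in auto)
  then show ?thesis by simp
qed

lemma sum_Idx1: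
  assumes "\<And>x. x \<in> Idx L \<Longrightarrow> wt (fst x) \<noteq> 1 \<Longrightarrow> g x = 0"
  shows "sum g (Idx L) = (\<Sum>p\<in>KK L. g (phi L p))"
proof -
  have "sum g (Idx L) = sum g {x \<in> Idx L. wt (fst x) = 1}"
  proof (rule sum.mono_neutral_right)
    show "finite (Idx L)" by (rule finite_Idx)
    show "{x \<in> Idx L. wt (fst x) = 1} \<subseteq> Idx L" by blast
    show "\<forall>i\<in>Idx L - {x \<in> Idx L. wt (fst x) = 1}. g i = 0" using assms by blast
  qed
  also have "\<dots> = sum g (phi L ` KK L)" by (simp only: Idx1_eq)
  also have "\<dots> = (\<Sum>p\<in>KK L. g (phi L p))" by (simp add: sum.reindex[OF phi_inj])
  finally show ?thesis .
qed

lemma P1_left: "x \<in> Idx L \<Longrightarrow> (\<Sum>z\<in>Idx L. P1 L x z * F z) = (if wt (fst x) = 1 then F x else 0)"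
proof -
  assume x: "x \<in> Idx L"
  have "\<And>z. P1 L x z * F z = (if x = z then (if wt (fst x) = 1 then F x else 0) else 0)"
    by (auto simp: P1_def)
  then show ?thesis using x by (simp add: finite_Idx)
qed

lemma P1_right: "y \<in> Idx L \<Longrightarrow> (\<Sum>w\<in>Idx L. G w * P1 L w y) = (if wt (fst y) = 1 then G y else 0)"
proof -
  assume y: "y \<in> Idx L"
  have "\<And>w. G w * P1 L w y = (if w = y then (if wt (fst y) = 1 then G y else 0) else 0)"
    by (auto simp: P1_def)
  then show ?thesis using y by (simp add: finite_Idx)
qed

lemma rho_supp:
  assumes H: "\<forall>x\<in>Idx L. \<forall>y\<in>Idx L.
           (\<Sum>z\<in>Idx L. \<Sum>w\<in>Idx L. P1 L x z * \<rho> z w * P1 L w y) = \<rho> x y"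
    and x: "x \<in> Idx L" and y: "y \<in> Idx L"
  shows "\<rho> x y = (if wt (fst x) = 1 \<and> wt (fst y) = 1 then \<rho> x y else 0)"
proof -
  have "\<rho> x y = (\<Sum>z\<in>Idx L. \<Sum>w\<in>Idx L. P1 L x z * \<rho> z w * P1 L w y)" using H x y by simp
  also have "\<dots> = (\<Sum>z\<in>Idx L. P1 L x z * (\<Sum>w\<in>Idx L. \<rho> z w * P1 L w y))"
    by (simp add: sum_distrib_left mult.assoc)
  also have "\<dots> = (\<Sum>z\<in>Idx L. P1 L x z * (if wt (fst y) = 1 then \<rho> z y else 0))"
    using P1_right[OF y] by simp
  also have "\<dots> = (if wt (fst x) = 1 then (if wt (fst y) = 1 then \<rho> x y else 0) else 0)"
    using P1_left[OF x] by simp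
  finally have eq: "\<rho> x y = (if wt (fst x) = 1 then (if wt (fst y) = 1 then \<rho> x y else 0) else 0)" .
  show ?thesis using eq by metis
qed



abbreviation Hsupp where
  "Hsupp L \<rho> \<equiv> \<forall>x\<in>Idx L. \<forall>y\<in>Idx L.
           (\<Sum>z\<in>Idx L. \<Sum>w\<in>Idx L. P1 L x z * \<rho> z w * P1 L w y) = \<rho> x y"

lemma tr_reindex:
  assumes H: "Hsupp L \<rho>"
  shows "tr_prod L \<rho> E = (\<Sum>p\<in>KK L. \<Sum>q\<in>KK L. \<rho> (phi L p) (phi L q) * E (phi L q) (phi L p))"
proof -
  have "tr_prod L \<rho> E = (\<Sum>p\<in>KK L. \<Sum>y\<in>Idx L. \<rho> (phi L p) y * E y (phi L p))"
    unfolding tr_prod_def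
  proof (rule sum_Idx1)
    fix x assume x: "x \<in> Idx L" and w: "wt (fst x) \<noteq> 1"
    have "\<And>y. y \<in> Idx L \<Longrightarrow> \<rho> x y = 0" using rho_supp[OF H x] w by simp
    then show "(\<Sum>y\<in>Idx L. \<rho> x y * E y x) = 0" by simp
  qed
  also have "\<dots> = (\<Sum>p\<in>KK L. \<Sum>q\<in>KK L. \<rho> (phi L p) (phi L q) * E (phi L q) (phi L p))"
  proof (rule sum.cong[OF refl])
    fix p assume p: "p \<in> KK L"
    show "(\<Sum>y\<in>Idx L. \<rho> (phi L p) y * E y (phi L p)) = (\<Sum>q\<in>KK L. \<rho> (phi L p) (phi L q) * E (phi L q) (phi L p))"
    proof (rule sum_Idx1)
      fix y assume y: "y \<in> Idx L" and w: "wt (fst y) \<noteq> 1"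
      have "\<rho> (phi L p) y = 0" using rho_supp[OF H phi_Idx[OF p] y] w by simp
      then show "\<rho> (phi L p) y * E y (phi L p) = 0" by simp
    qed
  qed
  finally show ?thesis .
qed

lemma cl1:
  assumes "finite A" "a \<in> A" "b \<in> A"
  shows "(\<Sum>p\<in>A. \<Sum>q\<in>A. R p q * complex_of_real (if p = a \<and> q = b then c else 0)) = R a b * complex_of_real c"
proof -
  have "\<And>p. (\<Sum>q\<in>A. R p q * complex_of_real (if p = a \<and> q = b then c else 0)) = (if p = a then R a b * complex_of_real c else 0)"
  proof -
    fix p
    have "\<And>q. R p q * complex_of_real (if p = a \<and> q = b then c else 0) = (if q = b then (if p = a then R a b * complex_of_real c else 0) else 0)"
      by auto
    then show "(\<Sum>q\<in>A. R p q * complex_of_real (if p = a \<and> q = b then c else 0)) = (if p = a then R a b * complex_of_real c else 0)"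
      using assms by simp
  qed
  then show ?thesis using assms by simp
qed

lemma cl_diag:
  assumes "finite A"
  shows "(\<Sum>p\<in>A. \<Sum>q\<in>A. R p q * complex_of_real (if q = p then w p else 0)) = (\<Sum>p\<in>A. R p p * complex_of_real (w p))"
proof (rule sum.cong[OF refl])
  fix p assume p: "p \<in> A"
  have "\<And>q. R p q * complex_of_real (if q = p then w p else 0) = (if q = p then R p p * complex_of_real (w p) else 0)"
    by auto
  then show "(\<Sum>q\<in>A. R p q * complex_of_real (if q = p then w p else 0)) = R p p * complex_of_real (w p)"
    using assms p by simp
qed

lemma finite_KK: "finite (KK L)" by (simp add: KK_def)

lemma KK_mem: "j \<in> {1..L-1} \<Longrightarrow> (j, j) \<in> KK L \<and> (j, Suc j) \<in> KK L \<and> (Suc j, j) \<in> KK L \<and> (Suc j, Suc j) \<in> KK L"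
  by (auto simp: KK_def)

lemma Ij_collapse:
  assumes j: "j \<in> {1..L-1}"
  shows "(\<Sum>p\<in>KK L. \<Sum>q\<in>KK L. R p q * complex_of_real (Ij j p q)) =
    R (j, j) (Suc j, Suc j) + R (j, Suc j) (Suc j, j) + R (Suc j, j) (j, Suc j) + R (Suc j, Suc j) (j, j)"
proof -
  note m = KK_mem[OF j]
  have "(\<Sum>p\<in>KK L. \<Sum>q\<in>KK L. R p q * complex_of_real (Ij j p q)) =
     (\<Sum>p\<in>KK L. \<Sum>q\<in>KK L. R p q * complex_of_real (if p = (j, j) \<and> q = (Suc j, Suc j) then 1 else 0))
   + (\<Sum>p\<in>KK L. \<Sum>q\<in>KK L. R p q * complex_of_real (if p = (j, Suc j) \<and> q = (Suc j, j) then 1 else 0))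
   + (\<Sum>p\<in>KK L. \<Sum>q\<in>KK L. R p q * complex_of_real (if p = (Suc j, j) \<and> q = (j, Suc j) then 1 else 0))
   + (\<Sum>p\<in>KK L. \<Sum>q\<in>KK L. R p q * complex_of_real (if p = (Suc j, Suc j) \<and> q = (j, j) then 1 else 0))"
    unfolding Ij_def of_real_add distrib_left sum.distrib by simp
  also have "\<dots> = R (j, j) (Suc j, Suc j) + R (j, Suc j) (Suc j, j) + R (Suc j, j) (j, Suc j) + R (Suc j, Suc j) (j, j)"
    using m by (simp only: cl1[OF finite_KK] mult_1_right of_real_1)
  finally show ?thesis .
qed



lemma swap3: "(\<Sum>p\<in>A. \<Sum>q\<in>B. \<Sum>j\<in>C. f p q j) = (\<Sum>j\<in>C. \<Sum>p\<in>A. \<Sum>q\<in>B. f p q j)"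
proof -
  have "(\<Sum>p\<in>A. \<Sum>q\<in>B. \<Sum>j\<in>C. f p q j) = (\<Sum>p\<in>A. \<Sum>j\<in>C. \<Sum>q\<in>B. f p q j)"
    by (rule sum.cong[OF refl]) (rule sum.swap)
  also have "\<dots> = (\<Sum>j\<in>C. \<Sum>p\<in>A. \<Sum>q\<in>B. f p q j)" by (rule sum.swap)
  finally show ?thesis .
qed

lemma tr_eb:
  assumes L: "L \<ge> 3" and H: "Hsupp L \<rho>"
  shows "tr_prod L \<rho> (e_b L) = (\<Sum>p\<in>KK L. \<rho> (phi L p) (phi L p)) * complex_of_real (1/2)
     - (\<Sum>j\<in>{1..L-1}. complex_of_real (cc L j / 2) *
        (\<rho> (phi L (j, j)) (phi L (Suc j, Suc j)) + \<rho> (phi L (j, Suc j)) (phi L (Suc j, j))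
       + \<rho> (phi L (Suc j, j)) (phi L (j, Suc j)) + \<rho> (phi L (Suc j, Suc j)) (phi L (j, j))))"
proof -
  define R where "R = (\<lambda>p q. \<rho> (phi L p) (phi L q))"
  have "tr_prod L \<rho> (e_b L) = (\<Sum>p\<in>KK L. \<Sum>q\<in>KK L. R p q * e_b L (phi L q) (phi L p))"
    unfolding R_def by (rule tr_reindex[OF H])
  also have "\<dots> = (\<Sum>p\<in>KK L. \<Sum>q\<in>KK L. R p q * complex_of_real ((if q = p then 1 / 2 else 0) - (\<Sum>j\<in>{1..L-1}. cc L j / 2 * Ij j p q)))"
    by (intro sum.cong refl) (simp add: e_b_phi[OF L])
  also have "\<dots> = (\<Sum>p\<in>KK L. \<Sum>q\<in>KK L. R p q * complex_of_real (if q = p then 1 / 2 else 0))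
      - (\<Sum>p\<in>KK L. \<Sum>q\<in>KK L. \<Sum>j\<in>{1..L-1}. complex_of_real (cc L j / 2) * (R p q * complex_of_real (Ij j p q)))"
  proof -
    have pw: "\<And>p q. R p q * complex_of_real ((if q = p then 1 / 2 else 0) - (\<Sum>j\<in>{1..L-1}. cc L j / 2 * Ij j p q))
      = R p q * complex_of_real (if q = p then 1 / 2 else 0) - (\<Sum>j\<in>{1..L-1}. complex_of_real (cc L j / 2) * (R p q * complex_of_real (Ij j p q)))"
      by (simp only: of_real_diff of_real_sum of_real_mult right_diff_distrib sum_distrib_left mult.left_commute)
    show ?thesis by (simp only: pw sum_subtractf)
  qed
  also have "(\<Sum>p\<in>KK L. \<Sum>q\<in>KK L. R p q * complex_of_real (if q = p then 1 / 2 else 0)) = (\<Sum>p\<in>KK L. R p p) * complex_of_real (1/2)"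
    using cl_diag[OF finite_KK, where R=R and w="\<lambda>_. 1/2"] by (simp only: sum_distrib_right)
  also have "(\<Sum>p\<in>KK L. \<Sum>q\<in>KK L. \<Sum>j\<in>{1..L-1}. complex_of_real (cc L j / 2) * (R p q * complex_of_real (Ij j p q)))
     = (\<Sum>j\<in>{1..L-1}. complex_of_real (cc L j / 2) * (\<Sum>p\<in>KK L. \<Sum>q\<in>KK L. R p q * complex_of_real (Ij j p q)))"
    by (rule trans[OF swap3]) (simp only: sum_distrib_left)
  also have "\<dots> = (\<Sum>j\<in>{1..L-1}. complex_of_real (cc L j / 2) *
        (R (j, j) (Suc j, Suc j) + R (j, Suc j) (Suc j, j) + R (Suc j, j) (j, Suc j) + R (Suc j, Suc j) (j, j)))"
    by (intro sum.cong refl) (simp add: Ij_collapse)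
  finally show ?thesis unfolding R_def .
qed

lemma EPj_alt: "EPj L j q p = (if p = (j, Suc j) \<and> q = (j, Suc j) then kappa L (Suc j) else 0)
     + (if p = (Suc j, j) \<and> q = (Suc j, j) then kappa L j else 0)"
  by (auto simp: EPj_def)

lemma tr_eph:
  assumes H: "Hsupp L \<rho>"
  shows "tr_prod L \<rho> (e_ph L) = (\<Sum>j\<in>{1..L-1}.
        \<rho> (phi L (j, Suc j)) (phi L (j, Suc j)) * complex_of_real (kappa L (Suc j))
      + \<rho> (phi L (Suc j, j)) (phi L (Suc j, j)) * complex_of_real (kappa L j))"
proof -
  define R where "R = (\<lambda>p q. \<rho> (phi L p) (phi L q))"
  have "tr_prod L \<rho> (e_ph L) = (\<Sum>p\<in>KK L. \<Sum>q\<in>KK L. R p q * e_ph L (phi L q) (phi L p))"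
    unfolding R_def by (rule tr_reindex[OF H])
  also have "\<dots> = (\<Sum>p\<in>KK L. \<Sum>q\<in>KK L. \<Sum>j\<in>{1..L-1}. R p q * complex_of_real (EPj L j q p))"
    by (intro sum.cong refl) (simp add: e_ph_phi sum_distrib_left)
  also have "\<dots> = (\<Sum>j\<in>{1..L-1}. \<Sum>p\<in>KK L. \<Sum>q\<in>KK L. R p q * complex_of_real (EPj L j q p))"
    by (rule swap3)
  also have "\<dots> = (\<Sum>j\<in>{1..L-1}. R (j, Suc j) (j, Suc j) * complex_of_real (kappa L (Suc j))
      + R (Suc j, j) (Suc j, j) * complex_of_real (kappa L j))"
  proof (intro sum.cong refl)
    fix j assume j: "j \<in> {1..L-1}"
    note m = KK_mem[OF j]
    have "(\<Sum>p\<in>KK L. \<Sum>q\<in>KK L. R p q * complex_of_real (EPj L j q p)) =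
       (\<Sum>p\<in>KK L. \<Sum>q\<in>KK L. R p q * complex_of_real (if p = (j, Suc j) \<and> q = (j, Suc j) then kappa L (Suc j) else 0))
     + (\<Sum>p\<in>KK L. \<Sum>q\<in>KK L. R p q * complex_of_real (if p = (Suc j, j) \<and> q = (Suc j, j) then kappa L j else 0))"
      unfolding EPj_alt of_real_add distrib_left sum.distrib by simp
    also have "\<dots> = R (j, Suc j) (j, Suc j) * complex_of_real (kappa L (Suc j))
      + R (Suc j, j) (Suc j, j) * complex_of_real (kappa L j)"
      using m by (simp only: cl1[OF finite_KK])
    finally show "(\<Sum>p\<in>KK L. \<Sum>q\<in>KK L. R p q * complex_of_real (EPj L j q p)) = R (j, Suc j) (j, Suc j) * complex_of_real (kappa L (Suc j))
      + R (Suc j, j) (Suc j, j) * complex_of_real (kappa L j)" .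
  qed
  finally show ?thesis unfolding R_def .
qed



lemma qf2:
  assumes "finite S" "A \<in> S" "B \<in> S" "A \<noteq> B"
  shows "(\<Sum>x\<in>S. \<Sum>y\<in>S. cnj ((if x = A then complex_of_real a else 0) + (if x = B then complex_of_real b else 0)) * r x y *
          ((if y = A then complex_of_real a else 0) + (if y = B then complex_of_real b else 0)))
   = complex_of_real (a * a) * r A A + complex_of_real (a * b) * r A B + complex_of_real (b * a) * r B A + complex_of_real (b * b) * r B B"
proof -
  have inner: "\<And>x. (\<Sum>y\<in>S. cnj ((if x = A then complex_of_real a else 0) + (if x = B then complex_of_real b else 0)) * r x y *
          ((if y = A then complex_of_real a else 0) + (if y = B then complex_of_real b else 0)))
     = cnj ((if x = A then complex_of_real a else 0) + (if x = B then complex_of_real b else 0)) * (r x A * complex_of_real a + r x B * complex_of_real b)"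
  proof -
    fix x
    define c where "c = cnj ((if x = A then complex_of_real a else 0) + (if x = B then complex_of_real b else 0))"
    have "\<And>y. c * r x y * ((if y = A then complex_of_real a else 0) + (if y = B then complex_of_real b else 0))
       = (if y = A then c * r x A * complex_of_real a else 0) + (if y = B then c * r x B * complex_of_real b else 0)"
      by (auto simp: distrib_left)
    then have "(\<Sum>y\<in>S. c * r x y * ((if y = A then complex_of_real a else 0) + (if y = B then complex_of_real b else 0)))
       = c * r x A * complex_of_real a + c * r x B * complex_of_real b"
      using assms by (simp add: sum.distrib)
    then show "?thesis x" unfolding c_def by (simp add: algebra_simps)
  qed
  have outer: "\<And>x. cnj ((if x = A then complex_of_real a else 0) + (if x = B then complex_of_real b else 0)) * (r x A * complex_of_real a + r x B * complex_of_real b)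
     = (if x = A then complex_of_real a * (r A A * complex_of_real a + r A B * complex_of_real b) else 0)
     + (if x = B then complex_of_real b * (r B A * complex_of_real a + r B B * complex_of_real b) else 0)"
    using assms(4) by auto
  show ?thesis
    unfolding inner outer using assms by (simp add: sum.distrib algebra_simps)
qed



lemma Re_ofreal_mult: "Re (complex_of_real r * z) = r * Re z" by simp

lemma psd_pair:
  assumes dens: "density_op L \<rho>" and a: "a \<in> KK L" and b: "b \<in> KK L" and ab: "a \<noteq> b"
  shows "0 \<le> x * x * Re (\<rho> (phi L a) (phi L a)) + x * y * (Re (\<rho> (phi L a) (phi L b)) + Re (\<rho> (phi L b) (phi L a)))
     + y * y * Re (\<rho> (phi L b) (phi L b))"
proof -
  have A: "phi L a \<in> Idx L" and B: "phi L b \<in> Idx L" using phi_Idx a b by auto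
  have AB: "phi L a \<noteq> phi L b" using phi_inj[of L] a b ab by (auto dest: inj_onD)
  define v where "v = (\<lambda>z. (if z = phi L a then complex_of_real x else 0) + (if z = phi L b then complex_of_real y else 0))"
  have "0 \<le> Re (\<Sum>z\<in>Idx L. \<Sum>w\<in>Idx L. cnj (v z) * \<rho> z w * v w)"
    using dens unfolding density_op_def by blast
  also have "(\<Sum>z\<in>Idx L. \<Sum>w\<in>Idx L. cnj (v z) * \<rho> z w * v w) =
     complex_of_real (x * x) * \<rho> (phi L a) (phi L a) + complex_of_real (x * y) * \<rho> (phi L a) (phi L b)
     + complex_of_real (y * x) * \<rho> (phi L b) (phi L a) + complex_of_real (y * y) * \<rho> (phi L b) (phi L b)"
    unfolding v_def by (rule qf2[OF finite_Idx A B AB])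
  finally show ?thesis by (simp only: plus_complex.sel Re_ofreal_mult distrib_left mult.commute[of y x] add.assoc)
qed

lemma psd_single:
  assumes dens: "density_op L \<rho>" and a: "a \<in> KK L"
  shows "0 \<le> Re (\<rho> (phi L a) (phi L a))"
proof -
  have A: "phi L a \<in> Idx L" using phi_Idx a by auto
  define v where "v = (\<lambda>z. if z = phi L a then (1::complex) else 0)"
  have "0 \<le> Re (\<Sum>z\<in>Idx L. \<Sum>w\<in>Idx L. cnj (v z) * \<rho> z w * v w)"
    using dens unfolding density_op_def by blast
  also have "(\<Sum>z\<in>Idx L. \<Sum>w\<in>Idx L. cnj (v z) * \<rho> z w * v w) = \<rho> (phi L a) (phi L a)"
  proof -
    have "\<And>z w. cnj (v z) * \<rho> z w * v w = (if w = phi L a then (if z = phi L a then \<rho> (phi L a) (phi L a) else 0) else 0)"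
      by (simp add: v_def)
    then show ?thesis using A by (simp add: finite_Idx)
  qed
  finally show ?thesis .
qed

lemma herm_Re:
  assumes dens: "density_op L \<rho>" and a: "a \<in> KK L" and b: "b \<in> KK L"
  shows "Re (\<rho> (phi L b) (phi L a)) = Re (\<rho> (phi L a) (phi L b))"
proof -
  have "\<rho> (phi L b) (phi L a) = cnj (\<rho> (phi L a) (phi L b))"
    using dens phi_Idx[OF a] phi_Idx[OF b] unfolding density_op_def by blast
  then show ?thesis by simp
qed

lemma trace_one:
  assumes dens: "density_op L \<rho>" and H: "Hsupp L \<rho>"
  shows "(\<Sum>p\<in>KK L. \<rho> (phi L p) (phi L p)) = 1"
proof -
  have "(\<Sum>x\<in>Idx L. \<rho> x x) = (\<Sum>p\<in>KK L. \<rho> (phi L p) (phi L p))"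
  proof (rule sum_Idx1)
    fix x assume x: "x \<in> Idx L" and w: "wt (fst x) \<noteq> 1"
    show "\<rho> x x = 0" using rho_supp[OF H x x] w by simp
  qed
  moreover have "(\<Sum>x\<in>Idx L. \<rho> x x) = 1" using dens unfolding density_op_def by blast
  ultimately show ?thesis by simp
qed



lemma kappa_id:
  assumes L: "L \<ge> 3"
  shows "(\<Sum>j\<in>{1..L-1}. kappa L j * f j + kappa L (Suc j) * f (Suc j)) = (\<Sum>i\<in>{1..L}. f i)"
proof -
  have "(\<Sum>i\<in>{1..L}. f i) = (\<Sum>i\<in>{1..L}. \<Sum>j\<in>{1..L-1}. 2 * f i * dg L j i i)"
  proof (rule sum.cong[OF refl])
    fix i assume i: "i \<in> {1..L}"
    show "f i = (\<Sum>j\<in>{1..L-1}. 2 * f i * dg L j i i)"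
      using kappa_sum[OF i L] by (simp add: sum_distrib_left[symmetric])
  qed
  also have "\<dots> = (\<Sum>j\<in>{1..L-1}. \<Sum>i\<in>{1..L}. 2 * f i * dg L j i i)" by (rule sum.swap)
  also have "\<dots> = (\<Sum>j\<in>{1..L-1}. kappa L j * f j + kappa L (Suc j) * f (Suc j))"
  proof (rule sum.cong[OF refl])
    fix j assume j: "j \<in> {1..L-1}"
    have "\<And>i. 2 * f i * dg L j i i = (if i = j then kappa L j * f j else 0) + (if i = Suc j then kappa L (Suc j) * f (Suc j) else 0)"
      by (auto simp: dg_def)
    then show "(\<Sum>i\<in>{1..L}. 2 * f i * dg L j i i) = kappa L j * f j + kappa L (Suc j) * f (Suc j)"
      using j by (auto simp: sum.distrib)
  qed
  finally show ?thesis by simp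
qed

lemma subset_sum:
  assumes nn: "\<And>p. p \<in> KK L \<Longrightarrow> (0::real) \<le> d p"
  shows "(\<Sum>i\<in>{1..L}. d (i, i)) + (\<Sum>j\<in>{1..L-1}. d (j, Suc j)) + (\<Sum>j\<in>{1..L-1}. d (Suc j, j)) \<le> (\<Sum>p\<in>KK L. d p)"
proof -
  define S1 where "S1 = (\<lambda>i. (i, i)) ` {1..L}"
  define S2 where "S2 = (\<lambda>j. (j, Suc j)) ` {1..L-1}"
  define S3 where "S3 = (\<lambda>j. (Suc j, j)) ` {1..L-1}"
  have f: "finite S1" "finite S2" "finite S3" unfolding S1_def S2_def S3_def by auto
  have d12: "S1 \<inter> S2 = {}" "S1 \<inter> S3 = {}" "S2 \<inter> S3 = {}" unfolding S1_def S2_def S3_def by auto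
  have e1: "sum d S1 = (\<Sum>i\<in>{1..L}. d (i, i))" unfolding S1_def by (subst sum.reindex) (auto simp: inj_on_def)
  have e2: "sum d S2 = (\<Sum>j\<in>{1..L-1}. d (j, Suc j))" unfolding S2_def by (subst sum.reindex) (auto simp: inj_on_def)
  have e3: "sum d S3 = (\<Sum>j\<in>{1..L-1}. d (Suc j, j))" unfolding S3_def by (subst sum.reindex) (auto simp: inj_on_def)
  have "sum d (S1 \<union> S2 \<union> S3) = sum d S1 + sum d S2 + sum d S3"
    using f d12 by (simp add: sum.union_disjoint Int_Un_distrib2)
  moreover have "sum d (S1 \<union> S2 \<union> S3) \<le> sum d (KK L)"
  proof (rule sum_mono2)
    show "finite (KK L)" by (rule finite_KK)
    show "S1 \<union> S2 \<union> S3 \<subseteq> KK L" unfolding S1_def S2_def S3_def KK_def by auto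
    fix b assume "b \<in> KK L - (S1 \<union> S2 \<union> S3)"
    then show "0 \<le> d b" using nn by auto
  qed
  ultimately show ?thesis using e1 e2 e3 by simp
qed



lemma s_facts:
  fixes lam :: real assumes lp: "lam > 0"
  shows "sqrt (1 + 2 * lam\<^sup>2) > 1" "sqrt (1 + 2 * lam\<^sup>2) \<ge> lam"
    "sqrt (1 + 2 * lam\<^sup>2) * sqrt (1 + 2 * lam\<^sup>2) = 1 + 2 * lam\<^sup>2"
proof -
  have p: "1 + 2 * lam\<^sup>2 > 1" using lp by (simp add: power2_eq_square)
  show "sqrt (1 + 2 * lam\<^sup>2) > 1" using p real_sqrt_less_iff[of 1 "1 + 2 * lam\<^sup>2"] by simp
  show "sqrt (1 + 2 * lam\<^sup>2) \<ge> lam"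
    by (rule real_le_rsqrt) (simp add: power2_eq_square)
  show "sqrt (1 + 2 * lam\<^sup>2) * sqrt (1 + 2 * lam\<^sup>2) = 1 + 2 * lam\<^sup>2"
    by (simp add: add_nonneg_nonneg)
qed

lemma kappa_cases:
  assumes L: "L \<ge> 3" and j: "j \<in> {1..L-1}"
  shows "(kappa L j = 1 \<and> kappa L (Suc j) = 1/2) \<or> (kappa L j = 1/2 \<and> kappa L (Suc j) = 1)
       \<or> (kappa L j = 1/2 \<and> kappa L (Suc j) = 1/2)"
  using L j by (auto simp: kappa_def)

lemma pair_ok:
  fixes lam a b Q k k' :: real
  assumes lp: "lam > 0"
    and kc: "(k = 1 \<and> k' = 1/2) \<or> (k = 1/2 \<and> k' = 1) \<or> (k = 1/2 \<and> k' = 1/2)"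
    and b0: "b \<ge> 0"
    and qf: "\<And>x y. 0 \<le> x * x * a + x * y * Q + y * y * b"
  shows "0 \<le> ((3 + sqrt (1 + 2 * lam\<^sup>2)) / 4 - k') * a + ((3 + sqrt (1 + 2 * lam\<^sup>2)) / 4 - k) * b
             - lam * (sqrt k * sqrt k') / 2 * Q"
proof -
  define s where "s = sqrt (1 + 2 * lam\<^sup>2)"
  have s1: "s > 1" and sl: "s \<ge> lam" and ss0: "s * s = 1 + 2 * lam\<^sup>2" using s_facts[OF lp] unfolding s_def by auto
  have ss: "s * s = 1 + 2 * (lam * lam)" using ss0 by (simp add: power2_eq_square)
  define A where "A = (3 + s) / 4 - k'"
  define B where "B = (3 + s) / 4 - k"
  define c where "c = sqrt k * sqrt k'"
  have k0: "k \<ge> 0" "k' \<ge> 0" using kc by auto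
  have "c * c = (sqrt k * sqrt k) * (sqrt k' * sqrt k')" unfolding c_def by (simp only: mult_ac)
  then have cc: "c * c = k * k'" using k0 by simp
  have Apos: "A > 0" using kc s1 unfolding A_def by auto
  have AB: "A * B \<ge> lam * lam * (c * c) / 4"
    using kc
  proof (elim disjE conjE)
    assume h: "k = 1" "k' = 1/2"
    have "A * B = (s * s - 1) / 16" unfolding A_def B_def h by (simp add: field_simps)
    also have "\<dots> = lam * lam * (c * c) / 4" unfolding ss cc h by simp
    finally show ?thesis by simp
  next
    assume h: "k = 1/2" "k' = 1"
    have "A * B = (s * s - 1) / 16" unfolding A_def B_def h by (simp add: field_simps)
    also have "\<dots> = lam * lam * (c * c) / 4" unfolding ss cc h by simp
    finally show ?thesis by simp
  next
    assume h: "k = 1/2" "k' = 1/2"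
    have h1: "lam / 4 \<le> (1 + s) / 4" using sl by simp
    have m1: "((1 + s) / 4) * ((1 + s) / 4) \<ge> (lam / 4) * (lam / 4)"
      using mult_mono[OF h1 h1] s1 lp by simp
    have m2: "A * B = ((1 + s) / 4) * ((1 + s) / 4)" unfolding A_def B_def h by (simp add: field_simps)
    have m3: "lam * lam * (c * c) / 4 = (lam / 4) * (lam / 4)" unfolding cc h by simp
    show ?thesis using m1 m2 m3 by linarith
  qed
  have q: "0 \<le> A * A * a + A * (- lam * c / 2) * Q + (- lam * c / 2) * (- lam * c / 2) * b"
    by (rule qf)
  have e1: "(- lam * c / 2) * (- lam * c / 2) = lam * lam * (c * c) / 4" by (simp add: field_simps)
  have "(- lam * c / 2) * (- lam * c / 2) * b \<le> A * B * b"
    unfolding e1 using AB b0 by (rule mult_right_mono)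
  with q have "0 \<le> A * A * a + A * (- lam * c / 2) * Q + A * B * b" by linarith
  also have "A * A * a + A * (- lam * c / 2) * Q + A * B * b = A * (A * a + B * b - lam * c / 2 * Q)"
    by (simp add: algebra_simps)
  finally have "0 \<le> A * (A * a + B * b - lam * c / 2 * Q)" .
  then have "0 \<le> A * a + B * b - lam * c / 2 * Q" using Apos by (simp add: zero_le_mult_iff)
  then show ?thesis unfolding A_def B_def c_def s_def .
qed

lemma f_nonneg:
  fixes lam :: real assumes "lam > 0" "lam \<le> 3 + sqrt 5"
  shows "0 \<le> (3 - 2 * lam + sqrt (1 + 2 * lam\<^sup>2)) / 4"
proof (cases "2 * lam - 3 \<le> 0")
  case True then show ?thesis by simp
next
  case False
  have "lam - 3 \<le> sqrt 5" using assms by simp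
  moreover have "lam - 3 \<ge> - sqrt 5"
  proof -
    have "sqrt 5 \<ge> 3/2" by (rule real_le_rsqrt) (simp add: power2_eq_square)
    then show ?thesis using False by simp
  qed
  ultimately have "(lam - 3)\<^sup>2 \<le> (sqrt 5)\<^sup>2" using abs_le_square_iff[of "lam - 3" "sqrt 5"] by auto
  then have "(lam - 3)\<^sup>2 \<le> 5" by simp
  then have "(2 * lam - 3)\<^sup>2 \<le> 1 + 2 * lam\<^sup>2" by (simp add: power2_eq_square algebra_simps)
  then have "2 * lam - 3 \<le> sqrt (1 + 2 * lam\<^sup>2)" by (rule real_le_rsqrt)
  then show ?thesis by simp
qed

lemma f_zero: "(3 - 2 * (3 + sqrt 5) + sqrt (1 + 2 * (3 + sqrt 5)\<^sup>2)) / 4 = (0::real)"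
proof -
  have "1 + 2 * (3 + sqrt 5)\<^sup>2 = (3 + 2 * sqrt 5)\<^sup>2"
    by (simp add: power2_eq_square algebra_simps)
  then have "sqrt (1 + 2 * (3 + sqrt 5)\<^sup>2) = 3 + 2 * sqrt 5" by simp
  then show ?thesis by simp
qed



lemma main_bound:
  assumes L: "L \<ge> 3" and dens: "density_op L \<rho>" and H: "Hsupp L \<rho>"
    and lp: "lam > 0" and lu: "lam \<le> 3 + sqrt 5"
  shows "Re (tr_prod L \<rho> (e_ph L)) \<le> lam * Re (tr_prod L \<rho> (e_b L)) + (3 - 2 * lam + sqrt (1 + 2 * lam\<^sup>2)) / 4"
proof -
  define JJ where "JJ = {1..L-1}"
  define d where "d = (\<lambda>p. Re (\<rho> (phi L p) (phi L p)))"
  define r where "r = (\<lambda>a b. Re (\<rho> (phi L a) (phi L b)))"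
  define g where "g = (3 + sqrt (1 + 2 * lam\<^sup>2)) / 4"
  define P where "P = (\<lambda>j. r (j, j) (Suc j, Suc j) + r (Suc j, Suc j) (j, j))"
  define Q where "Q = (\<lambda>j. r (j, Suc j) (Suc j, j) + r (Suc j, j) (j, Suc j))"
  have f0: "0 \<le> (3 - 2 * lam + sqrt (1 + 2 * lam\<^sup>2)) / 4" by (rule f_nonneg[OF lp lu])
  have fg: "(3 - 2 * lam + sqrt (1 + 2 * lam\<^sup>2)) / 4 = g - lam / 2" unfolding g_def by (simp add: field_simps)
  have g0: "g \<ge> lam / 2" using f0 fg by linarith
  have D1: "(\<Sum>p\<in>KK L. d p) = 1"
    using arg_cong[OF trace_one[OF dens H], of Re] unfolding d_def by (simp add: Re_sum)
  have dnn: "\<And>p. p \<in> KK L \<Longrightarrow> 0 \<le> d p" unfolding d_def using psd_single[OF dens] by blast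
  have trb: "Re (tr_prod L \<rho> (e_b L)) = (\<Sum>p\<in>KK L. d p) / 2 - (\<Sum>j\<in>JJ. cc L j / 2 * P j) - (\<Sum>j\<in>JJ. cc L j / 2 * Q j)"
  proof -
    have "Re (tr_prod L \<rho> (e_b L)) = (\<Sum>p\<in>KK L. d p) / 2 - (\<Sum>j\<in>JJ. cc L j / 2 * (P j + Q j))"
      unfolding tr_eb[OF L H] d_def P_def Q_def r_def JJ_def by (simp add: Re_sum add_ac)
    then show ?thesis by (simp add: distrib_left sum.distrib)
  qed
  have trph: "Re (tr_prod L \<rho> (e_ph L)) = (\<Sum>j\<in>JJ. kappa L (Suc j) * d (j, Suc j)) + (\<Sum>j\<in>JJ. kappa L j * d (Suc j, j))"
    unfolding tr_eph[OF H] d_def JJ_def by (simp add: Re_sum sum.distrib mult.commute)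
  have T1: "\<And>j. j \<in> JJ \<Longrightarrow> 0 \<le> g * (kappa L j * d (j, j) + kappa L (Suc j) * d (Suc j, Suc j)) - lam * (cc L j / 2 * P j)"
  proof -
    fix j assume j: "j \<in> JJ"
    note m = KK_mem[OF j[unfolded JJ_def]]
    have k0: "kappa L j \<ge> 0" "kappa L (Suc j) \<ge> 0" by (rule kappa_nn)+
    have ch: "0 \<le> kappa L j * d (j, j) + kappa L (Suc j) * d (Suc j, Suc j) - cc L j * P j"
    proof -
      have "0 \<le> sqrt (kappa L j) * sqrt (kappa L j) * d (j, j) + sqrt (kappa L j) * (- sqrt (kappa L (Suc j))) * P j
          + (- sqrt (kappa L (Suc j))) * (- sqrt (kappa L (Suc j))) * d (Suc j, Suc j)"
        unfolding d_def P_def r_def by (rule psd_pair[OF dens]) (use m in auto)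
      then show ?thesis using k0 by (simp add: cc_def)
    qed
    have nn: "0 \<le> kappa L j * d (j, j) + kappa L (Suc j) * d (Suc j, Suc j)"
      using k0 dnn m by simp
    have "(g - lam / 2) * (kappa L j * d (j, j) + kappa L (Suc j) * d (Suc j, Suc j)) \<ge> 0"
      using g0 nn by simp
    moreover have "lam / 2 * (kappa L j * d (j, j) + kappa L (Suc j) * d (Suc j, Suc j) - cc L j * P j) \<ge> 0"
      using lp ch by simp
    ultimately show "0 \<le> g * (kappa L j * d (j, j) + kappa L (Suc j) * d (Suc j, Suc j)) - lam * (cc L j / 2 * P j)"
      by (simp add: algebra_simps)
  qed
  have T2: "\<And>j. j \<in> JJ \<Longrightarrow> 0 \<le> (g - kappa L (Suc j)) * d (j, Suc j) + (g - kappa L j) * d (Suc j, j) - lam * (cc L j / 2 * Q j)"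
  proof -
    fix j assume j: "j \<in> JJ"
    note m = KK_mem[OF j[unfolded JJ_def]]
    have "0 \<le> (g - kappa L (Suc j)) * d (j, Suc j) + (g - kappa L j) * d (Suc j, j) - lam * (sqrt (kappa L j) * sqrt (kappa L (Suc j))) / 2 * Q j"
      unfolding g_def
    proof (rule pair_ok[OF lp kappa_cases[OF L j[unfolded JJ_def]]])
      show "0 \<le> d (Suc j, j)" using dnn m by blast
      fix x y
      show "0 \<le> x * x * d (j, Suc j) + x * y * Q j + y * y * d (Suc j, j)"
        unfolding d_def Q_def r_def by (rule psd_pair[OF dens]) (use m in auto)
    qed
    then show "0 \<le> (g - kappa L (Suc j)) * d (j, Suc j) + (g - kappa L j) * d (Suc j, j) - lam * (cc L j / 2 * Q j)"
      by (simp add: cc_def)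
  qed
  have sub: "(\<Sum>i\<in>{1..L}. d (i, i)) + (\<Sum>j\<in>JJ. d (j, Suc j)) + (\<Sum>j\<in>JJ. d (Suc j, j)) \<le> (\<Sum>p\<in>KK L. d p)"
    unfolding JJ_def by (rule subset_sum) (rule dnn)
  have kid: "(\<Sum>j\<in>JJ. kappa L j * d (j, j) + kappa L (Suc j) * d (Suc j, Suc j)) = (\<Sum>i\<in>{1..L}. d (i, i))"
    unfolding JJ_def by (rule kappa_id[OF L])
  have sT1: "0 \<le> (\<Sum>j\<in>JJ. g * (kappa L j * d (j, j) + kappa L (Suc j) * d (Suc j, Suc j)) - lam * (cc L j / 2 * P j))"
    using T1 by (rule sum_nonneg)
  have sT2: "0 \<le> (\<Sum>j\<in>JJ. (g - kappa L (Suc j)) * d (j, Suc j) + (g - kappa L j) * d (Suc j, j) - lam * (cc L j / 2 * Q j))"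
    using T2 by (rule sum_nonneg)
  have e1: "(\<Sum>j\<in>JJ. g * (kappa L j * d (j, j) + kappa L (Suc j) * d (Suc j, Suc j)) - lam * (cc L j / 2 * P j))
     = g * (\<Sum>i\<in>{1..L}. d (i, i)) - lam * (\<Sum>j\<in>JJ. cc L j / 2 * P j)"
    by (simp only: sum_subtractf sum_distrib_left[symmetric] kid)
  have e2: "(\<Sum>j\<in>JJ. (g - kappa L (Suc j)) * d (j, Suc j) + (g - kappa L j) * d (Suc j, j) - lam * (cc L j / 2 * Q j))
     = g * (\<Sum>j\<in>JJ. d (j, Suc j)) - (\<Sum>j\<in>JJ. kappa L (Suc j) * d (j, Suc j))
       + (g * (\<Sum>j\<in>JJ. d (Suc j, j)) - (\<Sum>j\<in>JJ. kappa L j * d (Suc j, j))) - lam * (\<Sum>j\<in>JJ. cc L j / 2 * Q j)"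
    by (simp only: sum_subtractf sum.distrib sum_distrib_left[symmetric] left_diff_distrib)
  have gg: "g * ((\<Sum>i\<in>{1..L}. d (i, i)) + (\<Sum>j\<in>JJ. d (j, Suc j)) + (\<Sum>j\<in>JJ. d (Suc j, j))) \<le> g * (\<Sum>p\<in>KK L. d p)"
    using sub g0 lp by (intro mult_left_mono) auto
  show ?thesis
    unfolding trph trb fg D1
    using sT1 sT2 e1 e2 gg D1 by (simp add: algebra_simps)
qed


theorem theorem1:
  fixes L :: nat and \<rho> :: op
  assumes "L \<ge> 3"
    and "density_op L \<rho>"
    and "\<forall>x\<in>Idx L. \<forall>y\<in>Idx L.
           (\<Sum>z\<in>Idx L. \<Sum>w\<in>Idx L. P1 L x z * \<rho> z w * P1 L w y) = \<rho> x y"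
  shows "let eb = Re (tr_prod L \<rho> (e_b L)); eph = Re (tr_prod L \<rho> (e_ph L)) in
           (0 \<le> eb \<and> eb \<le> (10 - 3 * sqrt 5) / 22 \<longrightarrow> eph \<le> (3 + sqrt 5) * eb) \<and>
           (eb > (10 - 3 * sqrt 5) / 22 \<longrightarrow>
              eph \<le> (INF lam\<in>{0<..<3 + sqrt 5}.
                       lam * eb + (3 - 2 * lam + sqrt (1 + 2 * lam\<^sup>2)) / 4))"
proof -
  have mb: "\<And>lam. lam > 0 \<Longrightarrow> lam \<le> 3 + sqrt 5 \<Longrightarrow>
     Re (tr_prod L \<rho> (e_ph L)) \<le> lam * Re (tr_prod L \<rho> (e_b L)) + (3 - 2 * lam + sqrt (1 + 2 * lam\<^sup>2)) / 4"
    by (rule main_bound[OF assms])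
  have s5: "sqrt 5 \<ge> (0::real)" by simp
  have c1: "Re (tr_prod L \<rho> (e_ph L)) \<le> (3 + sqrt 5) * Re (tr_prod L \<rho> (e_b L))"
    using mb[of "3 + sqrt 5"] s5 f_zero by simp
  have c2: "Re (tr_prod L \<rho> (e_ph L)) \<le> (INF lam\<in>{0<..<3 + sqrt 5}.
                       lam * Re (tr_prod L \<rho> (e_b L)) + (3 - 2 * lam + sqrt (1 + 2 * lam\<^sup>2)) / 4)"
  proof (rule cINF_greatest)
    have "(1::real) \<in> {0<..<3 + sqrt 5}" using s5 by (simp; linarith)
    then show "{0<..<3 + sqrt 5} \<noteq> ({} :: real set)" by blast
    fix lam :: real assume "lam \<in> {0<..<3 + sqrt 5}"
    then show "Re (tr_prod L \<rho> (e_ph L)) \<le> lam * Re (tr_prod L \<rho> (e_b L)) + (3 - 2 * lam + sqrt (1 + 2 * lam\<^sup>2)) / 4"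
      using mb by auto
  qed
  show ?thesis unfolding Let_def using c1 c2 by blast
qed

end
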